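(* The Grigorchuk group is intersection-saturated.
   Context: The Grigorchuk group is the (first) Grigorchuk group, the subgroup of automorphisms of the binary rooted tree generated by the four standard automorphisms $a,b,c,d$. For an integer $n\geq 1$ write $[n]=\{1,\dots,n\}$. An $n$-configuration is a map $c\colon \mathcal{P}([n])\setminus\{\emptyset\}\to\{0,1\}$. An $n$-configuration $c$ is realisable in a group $G$ if there exist subgroups $H_1,\dots,H_n\leq G$ such that for every non-empty subset $I\subseteq[n]$, the subgroup $\bigcap_{i\in I}H_i$ is finitely generated if and only if $c(I)=0$. A group $G$ is intersection-saturated if for every $n\geq 1$, every $n$-configuration is realisable in $G$. *)

theory Defs
  imports "HOL-Algebra.Algebra"
begin

text \<open>Vertices of the binary rooted tree are finite words over {0,1}, encoded as
  bool lists (False = 0, True = 1); the root is the empty word.\<close>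

fun grig_a :: "bool list \<Rightarrow> bool list" where
  "grig_a [] = []"
| "grig_a (x # w) = (\<not> x) # w"

fun grig_b :: "bool list \<Rightarrow> bool list"
and grig_c :: "bool list \<Rightarrow> bool list"
and grig_d :: "bool list \<Rightarrow> bool list" where
  "grig_b [] = []"
| "grig_b (False # w) = False # grig_a w"
| "grig_b (True # w) = True # grig_c w"
| "grig_c [] = []"
| "grig_c (False # w) = False # grig_a w"
| "grig_c (True # w) = True # grig_d w"
| "grig_d [] = []"
| "grig_d (False # w) = False # w"
| "grig_d (True # w) = True # grig_b w"

definition grigorchuk_group :: "(bool list \<Rightarrow> bool list) monoid" where
  "grigorchuk_group = (BijGroup (UNIV :: bool list set))
     \<lparr>carrier := generate (BijGroup (UNIV :: bool list set)) {grig_a, grig_b, grig_c, grig_d}\<rparr>"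

definition fg_subgroup :: "('a, 'b) monoid_scheme \<Rightarrow> 'a set \<Rightarrow> bool" where
  "fg_subgroup G H \<longleftrightarrow> subgroup H G \<and> (\<exists>S. finite S \<and> S \<subseteq> H \<and> generate G S = H)"

definition configuration :: "nat \<Rightarrow> (nat set \<Rightarrow> nat) \<Rightarrow> bool" where
  "configuration n c \<longleftrightarrow> (\<forall>I. I \<subseteq> {1..n} \<and> I \<noteq> {} \<longrightarrow> c I \<in> {0, 1})"

definition realisable :: "('a, 'b) monoid_scheme \<Rightarrow> nat \<Rightarrow> (nat set \<Rightarrow> nat) \<Rightarrow> bool" where
  "realisable G n c \<longleftrightarrow> (\<exists>H :: nat \<Rightarrow> 'a set.
      (\<forall>i \<in> {1..n}. subgroup (H i) G) \<and>
      (\<forall>I. I \<subseteq> {1..n} \<and> I \<noteq> {} \<longrightarrow> (fg_subgroup G (\<Inter>i\<in>I. H i) \<longleftrightarrow> c I = 0)))"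

definition intersection_saturated :: "('a, 'b) monoid_scheme \<Rightarrow> bool" where
  "intersection_saturated G \<longleftrightarrow>
     (\<forall>n \<ge> 1. \<forall>c. configuration n c \<longrightarrow> realisable G n c)"

end

theory Submission
  imports Defs
begin

lemma grig_basic:
  "grig_a (grig_a w) = w \<and> grig_b (grig_b w) = w \<and> grig_c (grig_c w) = w \<and> grig_d (grig_d w) = w
   \<and> grig_b (grig_c w) = grig_d w \<and> grig_c (grig_b w) = grig_d w
   \<and> grig_b (grig_d w) = grig_c w \<and> grig_d (grig_b w) = grig_c w
   \<and> grig_c (grig_d w) = grig_b w \<and> grig_d (grig_c w) = grig_b w"
proof (induction w)
  case Nil then show ?case by simp
next
  case (Cons x w) then show ?case by (cases x) auto
qed

lemma gaa[simp]: "grig_a (grig_a w) = w" using grig_basic by blast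
lemma gbb[simp]: "grig_b (grig_b w) = w" using grig_basic by blast
lemma gcc[simp]: "grig_c (grig_c w) = w" using grig_basic by blast
lemma gdd[simp]: "grig_d (grig_d w) = w" using grig_basic by blast
lemma gbc[simp]: "grig_b (grig_c w) = grig_d w" using grig_basic by blast
lemma gcb[simp]: "grig_c (grig_b w) = grig_d w" using grig_basic by blast
lemma gbd[simp]: "grig_b (grig_d w) = grig_c w" using grig_basic by blast
lemma gdb[simp]: "grig_d (grig_b w) = grig_c w" using grig_basic by blast
lemma gcd[simp]: "grig_c (grig_d w) = grig_b w" using grig_basic by blast
lemma gdc[simp]: "grig_d (grig_c w) = grig_b w" using grig_basic by blast

definition lft :: "bool list \<Rightarrow> (bool list \<Rightarrow> bool list) \<Rightarrow> bool list \<Rightarrow> bool list" where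
  "lft u f w = (if take (length u) w = u then u @ f (drop (length u) w) else w)"

definition "tt = grig_a \<circ> grig_b \<circ> grig_a \<circ> grig_b"
definition "Tt = grig_b \<circ> grig_a \<circ> grig_b \<circ> grig_a"
definition "uu = grig_a \<circ> grig_b \<circ> grig_a \<circ> grig_d \<circ> grig_a \<circ> grig_b \<circ> grig_a \<circ> grig_d"
definition "Uu = grig_d \<circ> grig_a \<circ> grig_b \<circ> grig_a \<circ> grig_d \<circ> grig_a \<circ> grig_b \<circ> grig_a"
definition "vv = grig_b \<circ> grig_a \<circ> grig_d \<circ> grig_a \<circ> grig_b \<circ> grig_a \<circ> grig_d \<circ> grig_a"
definition "Vv = grig_a \<circ> grig_d \<circ> grig_a \<circ> grig_b \<circ> grig_a \<circ> grig_d \<circ> grig_a \<circ> grig_b"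

lemmas wdefs = tt_def Tt_def uu_def Uu_def vv_def Vv_def

lemma lft_cons: "lft [x] f (y # w) = (if y = x then x # f w else y # w)"
  by (auto simp: lft_def)
lemma lft_nil: "lft [x] f [] = []" by (simp add: lft_def)


lemma id1: "lft [True] tt = uu" apply (rule ext, case_tac x, simp add: lft_def wdefs, case_tac a, simp_all add: lft_def wdefs) done
lemma id2: "lft [False] tt = vv" apply (rule ext, case_tac x, simp add: lft_def wdefs, case_tac a, simp_all add: lft_def wdefs) done
lemma id3: "lft [True] uu = uu \<circ> Tt \<circ> Uu \<circ> tt" apply (rule ext, case_tac x, simp add: lft_def wdefs, case_tac a, simp_all add: lft_def wdefs) done
lemma id4: "lft [True] vv = Uu \<circ> tt \<circ> uu \<circ> Tt" apply (rule ext, case_tac x, simp add: lft_def wdefs, case_tac a, simp_all add: lft_def wdefs) done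
lemma id5: "lft [False] uu = vv \<circ> tt \<circ> Vv \<circ> Tt" apply (rule ext, case_tac x, simp add: lft_def wdefs, case_tac a, simp_all add: lft_def wdefs) done
lemma id6: "lft [False] vv = Vv \<circ> Tt \<circ> vv \<circ> tt" apply (rule ext, case_tac x, simp add: lft_def wdefs, case_tac a, simp_all add: lft_def wdefs) done
lemma id7: "grig_d \<circ> tt \<circ> grig_d = Uu \<circ> tt" by (rule ext, simp add: wdefs)
lemma id8: "grig_d \<circ> uu \<circ> grig_d = Uu" by (rule ext, simp add: wdefs)
lemma id9: "grig_d \<circ> vv \<circ> grig_d = vv"
  apply (rule ext, case_tac x, simp add: wdefs)
  apply (case_tac a; case_tac list; simp add: wdefs)
  done
lemma inv1: "Tt \<circ> tt = id" "tt \<circ> Tt = id" "Uu \<circ> uu = id" "uu \<circ> Uu = id" "Vv \<circ> vv = id" "vv \<circ> Vv = id"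
  by (rule ext, simp add: wdefs)+

abbreviation "hinv f \<equiv> inv_into UNIV f"

abbreviation "BG \<equiv> BijGroup (UNIV :: bool list set)"

lemma BG_carrier: "carrier BG = {f. bij f}"
  by (auto simp: BijGroup_def Bij_def)

lemma BG_mult: "bij f \<Longrightarrow> bij g \<Longrightarrow> monoid.mult BG f g = f \<circ> g"
  by (auto simp: BijGroup_def Bij_def compose_def fun_eq_iff)

lemma BG_one: "one BG = id"
  by (auto simp: BijGroup_def fun_eq_iff)

lemma BG_inv: "bij f \<Longrightarrow> m_inv BG f = hinv f"
  by (simp add: inv_BijGroup Bij_def restrict_UNIV)

lemma grp_BG: "group BG" by (rule group_BijGroup)

lemma inv_comp_id: "bij f \<Longrightarrow> hinv f \<circ> f = id" "bij f \<Longrightarrow> f \<circ> hinv f = id"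
  by (auto simp: fun_eq_iff bij_def surj_f_inv_f inv_f_f)

lemma bij_inv': "bij f \<Longrightarrow> bij (hinv f)" by (simp add: bij_imp_bij_inv)

lemma inv_from_comp: assumes "bij g" "f \<circ> g = id" shows "hinv g = f"
proof -
  have "g \<circ> f = id"
  proof -
    have "g \<circ> f = g \<circ> f \<circ> (g \<circ> hinv g)" using inv_comp_id[OF assms(1)] by simp
    also have "\<dots> = g \<circ> (f \<circ> g) \<circ> hinv g" by (simp add: comp_assoc)
    also have "\<dots> = id" using assms inv_comp_id by simp
    finally show ?thesis .
  qed
  then show ?thesis using inv_unique_comp[of g f] assms by (simp add: inv_def)
qed

lemma gen_hom:
  assumes hc: "\<And>f g. bij f \<Longrightarrow> bij g \<Longrightarrow> h (f \<circ> g) = h f \<circ> h g"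
    and hid: "h id = id" and hb: "\<And>f. bij f \<Longrightarrow> bij (h f)"
    and T: "T \<subseteq> carrier BG"
    and x: "x \<in> generate BG T"
  shows "h x \<in> generate BG (h ` T)"
  using x
proof (induction rule: generate.induct)
  case one then show ?case using hid BG_one generate.one by metis
next
  case (incl g) then show ?case by (simp add: generate.incl)
next
  case (inv g)
  have bg: "bij g" using inv T BG_carrier by auto
  have "h (hinv g) \<circ> h g = id" using hc[of "hinv g" g] bg bij_inv'[OF bg] inv_comp_id(1)[OF bg] hid by simp
  then have "h (hinv g) = hinv (h g)" using inv_from_comp[of "h g" "h (hinv g)"] hb bg by simp
  also have "\<dots> = m_inv BG (h g)" using BG_inv hb bg by simp
  finally show ?case using BG_inv bg inv.hyps generate.inv[of "h g" "h ` T" BG] by simp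
next
  case (eng g1 g2)
  have "generate BG T \<subseteq> carrier BG" using group.generate_in_carrier[OF grp_BG] T by blast
  then have b: "bij g1" "bij g2" using eng BG_carrier by auto
  have "h ` T \<subseteq> carrier BG" using T hb BG_carrier by auto
  then have "generate BG (h ` T) \<subseteq> carrier BG" using group.generate_in_carrier[OF grp_BG] by blast
  then have "bij (h g1)" "bij (h g2)" using eng BG_carrier by auto
  then have "h g1 \<circ> h g2 \<in> generate BG (h ` T)"
    using eng BG_mult generate.eng[of "h g1" BG "h ` T" "h g2"] by metis
  then show ?case using eng b BG_mult hc by metis
qed

section \<open>Tree maps and sections\<close>

definition tree :: "(bool list \<Rightarrow> bool list) \<Rightarrow> bool" where
  "tree g \<longleftrightarrow> (\<forall>w. length (g w) = length w) \<and> (\<forall>u w. take (length u) (g (u @ w)) = g u)"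

definition sec :: "(bool list \<Rightarrow> bool list) \<Rightarrow> bool list \<Rightarrow> bool list \<Rightarrow> bool list" where
  "sec g u = (\<lambda>w. drop (length u) (g (u @ w)))"

lemma tree_len: "tree g \<Longrightarrow> length (g w) = length w" by (simp add: tree_def)

lemma tree_app: assumes "tree g" shows "g (u @ w) = g u @ sec g u w"
proof -
  have "take (length u) (g (u @ w)) = g u" using assms by (simp add: tree_def)
  then show ?thesis unfolding sec_def by (metis append_take_drop_id)
qed

lemma tree_comp: assumes "tree f" "tree g" shows "tree (f \<circ> g)"
proof -
  have "take (length u) (f (g (u @ w))) = f (g u)" for u w
  proof -
    have "f (g (u @ w)) = f (g u @ sec g u w)" using tree_app[OF assms(2)] by simp
    also have "\<dots> = f (g u) @ sec f (g u) (sec g u w)" using tree_app[OF assms(1)] by simp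
    finally show ?thesis using tree_len[OF assms(1)] tree_len[OF assms(2)] by simp
  qed
  then show ?thesis using assms by (simp add: tree_def)
qed

lemma sec_comp: assumes "tree f" "tree g" shows "sec (f \<circ> g) u = sec f (g u) \<circ> sec g u"
proof
  fix w
  have "f (g (u @ w)) = f (g u) @ sec f (g u) (sec g u w)"
    using tree_app[OF assms(1)] tree_app[OF assms(2)] by simp
  then show "sec (f \<circ> g) u w = (sec f (g u) \<circ> sec g u) w"
    using tree_len[OF assms(1)] tree_len[OF assms(2)] by (simp add: sec_def)
qed

lemma sec_sec: "sec g (u @ v) = sec (sec g u) v"
  by (simp add: sec_def fun_eq_iff add.commute)

lemma sec_nil[simp]: "sec g [] = g" by (simp add: sec_def fun_eq_iff)

lemma gen_len: "length (grig_a w) = length w \<and> length (grig_b w) = length w \<and>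
   length (grig_c w) = length w \<and> length (grig_d w) = length w"
proof (induction w)
  case (Cons x w) then show ?case by (cases x) auto
qed simp

lemma gen_pref: "\<forall>w. take (length u) (grig_a (u @ w)) = grig_a u \<and> take (length u) (grig_b (u @ w)) = grig_b u \<and>
   take (length u) (grig_c (u @ w)) = grig_c u \<and> take (length u) (grig_d (u @ w)) = grig_d u"
proof (induction u)
  case (Cons x u) then show ?case
    by (cases x) (simp_all add: gen_len)
qed simp

lemma tree_gens: "tree grig_a" "tree grig_b" "tree grig_c" "tree grig_d"
  using gen_len gen_pref by (auto simp: tree_def)

lemma tree_id: "tree id" by (simp add: tree_def)

definition "Nuc = {id, grig_a, grig_b, grig_c, grig_d}"

lemma sec1: "sec grig_a [x] = id" "sec grig_b [False] = grig_a" "sec grig_b [True] = grig_c"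
  "sec grig_c [False] = grig_a" "sec grig_c [True] = grig_d" "sec grig_d [False] = id" "sec grig_d [True] = grig_b"
  "sec id [x] = id"
  by (cases x; simp add: sec_def fun_eq_iff)+

lemma sec_Nuc: "\<forall>Z. Z \<in> Nuc \<longrightarrow> sec Z u \<in> Nuc"
proof (induction u)
  case Nil then show ?case by simp
next
  case (Cons x u)
  have "sec Zg (x # u) = sec (sec Zg [x]) u" for Zg using sec_sec[of Zg "[x]" u] by simp
  moreover have "Zg \<in> Nuc \<Longrightarrow> sec Zg [x] \<in> Nuc" for Zg by (cases x) (auto simp: Nuc_def sec1)
  ultimately show ?case using Cons by auto
qed

definition "goodf g \<longleftrightarrow> bij g \<and> tree g \<and> finite (range (sec g))"

lemma goodf_comp: assumes "goodf f" "goodf g" shows "goodf (f \<circ> g)"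
proof -
  have "range (sec (f \<circ> g)) \<subseteq> (\<lambda>(p, q). p \<circ> q) ` (range (sec f) \<times> range (sec g))"
    using sec_comp assms by (auto simp: goodf_def)
  moreover have "finite ((\<lambda>(p, q). p \<circ> q) ` (range (sec f) \<times> range (sec g)))"
    using assms by (auto simp: goodf_def)
  ultimately have "finite (range (sec (f \<circ> g)))" using finite_subset by blast
  then show ?thesis using assms by (auto simp: goodf_def tree_comp bij_comp)
qed

lemma goodf_Nuc: "Zg \<in> Nuc \<Longrightarrow> goodf Zg"
proof -
  assume Zg: "Zg \<in> Nuc"
  have "range (sec Zg) \<subseteq> Nuc" using sec_Nuc Zg by auto
  then have "finite (range (sec Zg))" by (rule finite_subset) (simp add: Nuc_def)
  moreover have "bij Zg" using Zg by (auto simp: Nuc_def intro: involuntory_imp_bij)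
  moreover have "tree Zg" using Zg tree_gens tree_id by (auto simp: Nuc_def)
  ultimately show ?thesis by (simp add: goodf_def)
qed

abbreviation "gens \<equiv> {grig_a, grig_b, grig_c, grig_d}"
abbreviation "Gc \<equiv> generate BG gens"

lemma gens_bij: "gens \<subseteq> carrier BG"
  by (auto simp: BG_carrier intro: involuntory_imp_bij)

lemma Gc_good: "g \<in> Gc \<Longrightarrow> goodf g"
proof (induction rule: generate.induct)
  case one then show ?case using goodf_Nuc[of id] by (simp add: BG_one Nuc_def id_def)
next
  case (incl h) then show ?case using goodf_Nuc by (auto simp: Nuc_def)
next
  case (inv h)
  have "bij h" "\<And>x. h (h x) = x" using inv by (auto intro: involuntory_imp_bij)
  then have "hinv h = h" using inv_from_comp[of h h] by (simp add: fun_eq_iff)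
  then show ?case using inv goodf_Nuc BG_inv \<open>bij h\<close> by (auto simp: Nuc_def)
next
  case (eng h1 h2) then show ?case using BG_mult goodf_comp goodf_def by metis
qed

lemma Gc_sub: "subgroup Gc BG"
  using group.generate_is_subgroup[OF grp_BG gens_bij] .

definition "Kc = generate BG {tt, uu, vv}"

lemma words_Gc: "tt \<in> Gc" "uu \<in> Gc" "vv \<in> Gc" "Tt \<in> Gc" "Uu \<in> Gc" "Vv \<in> Gc"
proof -
  have g: "grig_a \<in> Gc" "grig_b \<in> Gc" "grig_c \<in> Gc" "grig_d \<in> Gc" by (auto intro: generate.incl)
  have m: "x \<in> Gc \<Longrightarrow> y \<in> Gc \<Longrightarrow> x \<circ> y \<in> Gc" for x y
    using generate.eng[of x BG gens y] Gc_good BG_mult by (simp add: goodf_def)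
  show "tt \<in> Gc" "uu \<in> Gc" "vv \<in> Gc" "Tt \<in> Gc" "Uu \<in> Gc" "Vv \<in> Gc"
    unfolding wdefs using g m by (simp_all add: comp_assoc)
qed

lemma Kc_sub_Gc: "Kc \<subseteq> Gc"
  unfolding Kc_def using words_Gc Gc_sub by (intro group.generate_subgroup_incl[OF grp_BG]) auto

lemma Kc_subgroup: "subgroup Kc BG"
  unfolding Kc_def using words_Gc Gc_sub subgroup.subset
  by (intro group.generate_is_subgroup[OF grp_BG]) blast

lemma Kc_good: "g \<in> Kc \<Longrightarrow> goodf g" using Kc_sub_Gc Gc_good by blast

lemma Kc_mult: "x \<in> Kc \<Longrightarrow> y \<in> Kc \<Longrightarrow> x \<circ> y \<in> Kc"
  using subgroup.m_closed[OF Kc_subgroup, of x y] BG_mult Kc_good by (simp add: goodf_def)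

lemma Kc_inv: "x \<in> Kc \<Longrightarrow> hinv x \<in> Kc"
  using subgroup.m_inv_closed[OF Kc_subgroup, of x] BG_inv Kc_good by (simp add: goodf_def)

lemma Kc_id: "id \<in> Kc" using subgroup.one_closed[OF Kc_subgroup] BG_one by simp

lemma words_Kc: "tt \<in> Kc" "uu \<in> Kc" "vv \<in> Kc" "Tt \<in> Kc" "Uu \<in> Kc" "Vv \<in> Kc"
proof -
  show t: "tt \<in> Kc" "uu \<in> Kc" "vv \<in> Kc" unfolding Kc_def by (auto intro: generate.incl)
  have "bij tt" "bij uu" "bij vv" using t Kc_good goodf_def by auto
  then show "Tt \<in> Kc" "Uu \<in> Kc" "Vv \<in> Kc" using Kc_inv[OF t(1)] Kc_inv[OF t(2)] Kc_inv[OF t(3)]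
      inv_from_comp inv1 by metis+
qed

lemma lft_app[simp]: "lft u g (u @ y) = u @ g y" by (simp add: lft_def)
lemma lft_nopref: "\<not> (\<exists>y. w = u @ y) \<Longrightarrow> lft u g w = w"
  by (auto simp: lft_def) (metis append_take_drop_id)
lemma lft_cases: "(\<exists>y. w = u @ y) \<or> lft u g w = w" using lft_nopref by blast

lemma lft_comp: "lft u (f \<circ> g) = lft u f \<circ> lft u g"
proof
  fix w show "lft u (f \<circ> g) w = (lft u f \<circ> lft u g) w"
    by (cases "\<exists>y. w = u @ y") (auto simp: lft_nopref)
qed

lemma lft_id: "lft u id = id"
proof
  fix w show "lft u id w = id w" by (cases "\<exists>y. w = u @ y") (auto simp: lft_nopref)
qed

lemma lft_bij: assumes "bij f" shows "bij (lft u f)"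
proof -
  have "lft u f \<circ> lft u (hinv f) = id" "lft u (hinv f) \<circ> lft u f = id"
    using lft_comp[symmetric] lft_id inv_comp_id[OF assms] by metis+
  then show ?thesis using o_bij by blast
qed

lemma lft_cons_split: "lft (x # u) f = lft [x] (lft u f)"
proof
  fix w show "lft (x # u) f w = lft [x] (lft u f) w"
  proof (cases "\<exists>y. w = x # u @ y")
    case True then obtain y where y: "w = x # u @ y" by blast
    show ?thesis using y lft_app[of "x # u" f y] lft_app[of "[x]" "lft u f" "u @ y"] lft_app[of u f y] by simp
  next
    case False
    then have "lft (x # u) f w = w" using lft_nopref[of w "x # u"] by simp
    moreover have "lft [x] (lft u f) w = w"
    proof (cases "\<exists>y. w = [x] @ y")
      case True
      then obtain y where y: "w = x # y" by auto
      then have "\<not> (\<exists>z. y = u @ z)" using False by auto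
      then show ?thesis using y lft_nopref[of y u] by (simp add: lft_cons)
    qed (simp add: lft_nopref)
    ultimately show ?thesis by simp
  qed
qed

lemma Kc_closed_hom:
  assumes hc: "\<And>f g. bij f \<Longrightarrow> bij g \<Longrightarrow> h (f \<circ> g) = h f \<circ> h g"
    and hid: "h id = id" and hb: "\<And>f. bij f \<Longrightarrow> bij (h f)"
    and img: "h tt \<in> Kc" "h uu \<in> Kc" "h vv \<in> Kc"
    and x: "x \<in> Kc"
  shows "h x \<in> Kc"
proof -
  have T: "{tt, uu, vv} \<subseteq> carrier BG" using words_Kc Kc_good by (auto simp: goodf_def BG_carrier)
  have "h x \<in> generate BG (h ` {tt, uu, vv})"
    using gen_hom[OF hc hid hb T] x unfolding Kc_def by blast
  also have "\<dots> \<subseteq> Kc" using img Kc_subgroup by (intro group.generate_subgroup_incl[OF grp_BG]) auto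
  finally show ?thesis .
qed

lemma Kc_lft1: assumes "x \<in> Kc" shows "lft [b] x \<in> Kc"
proof -
  have i: "lft [b] tt \<in> Kc" "lft [b] uu \<in> Kc" "lft [b] vv \<in> Kc"
    by (cases b; simp add: id1 id2 id3 id4 id5 id6 Kc_mult words_Kc)+
  show ?thesis using Kc_closed_hom[where h="lft [b]", OF lft_comp lft_id lft_bij i assms] .
qed

lemma Kc_lft: "x \<in> Kc \<Longrightarrow> lft u x \<in> Kc"
proof (induction u)
  case Nil
  have "lft [] x = x" by (simp add: lft_def fun_eq_iff)
  then show ?case using Nil by simp
next
  case (Cons b u) then show ?case using lft_cons_split Kc_lft1 by metis
qed

definition cd :: "(bool list \<Rightarrow> bool list) \<Rightarrow> bool list \<Rightarrow> bool list" where
  "cd f = grig_d \<circ> f \<circ> grig_d"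

lemma dd_id: "grig_d \<circ> grig_d = id" by (simp add: fun_eq_iff)
lemma cd_comp: "cd (f \<circ> g) = cd f \<circ> cd g" by (simp add: cd_def fun_eq_iff)
lemma cd_id: "cd id = id" by (simp add: cd_def fun_eq_iff)
lemma cd_cd: "cd (cd f) = f" by (simp add: cd_def fun_eq_iff)
lemma d_bij: "bij grig_d" by (rule involuntory_imp_bij) simp
lemma cd_bij: "bij f \<Longrightarrow> bij (cd f)" by (simp add: cd_def bij_comp d_bij)

lemma Kc_cd: assumes "x \<in> Kc" shows "cd x \<in> Kc"
proof -
  have i: "cd tt \<in> Kc" "cd uu \<in> Kc" "cd vv \<in> Kc"
    using id7 id8 id9 words_Kc Kc_mult by (simp_all add: cd_def comp_assoc)
  show ?thesis using Kc_closed_hom[where h=cd, OF cd_comp cd_id cd_bij i assms] .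
qed

section \<open>Spread map E\<close>

definition pos :: "nat \<Rightarrow> bool list" where "pos p = replicate p True @ [False]"

definition E :: "(nat \<Rightarrow> bool list \<Rightarrow> bool list) \<Rightarrow> bool list \<Rightarrow> bool list" where
  "E f w = (if False \<in> set w then
     (let p = length (takeWhile (\<lambda>x. x) w) in replicate p True @ False # f p (drop (Suc p) w)) else w)"

lemma E_pos[simp]: "E f (pos p @ w) = pos p @ f p w"
proof -
  have tw: "takeWhile (\<lambda>x. x) (replicate p True @ False # w) = replicate p True"
    by (induction p) auto
  have dr: "drop (Suc p) (replicate p True @ False # w) = w" by (induction p) auto
  show ?thesis using tw dr by (simp add: E_def pos_def)
qed

lemma E_decomp: "False \<in> set w \<Longrightarrow> \<exists>p z. w = pos p @ z"
proof (induction w)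
  case (Cons x w)
  show ?case
  proof (cases x)
    case True
    then obtain p z where "w = pos p @ z" using Cons by auto
    then have "x # w = pos (Suc p) @ z" using True by (simp add: pos_def)
    then show ?thesis by blast
  next
    case False
    then have "x # w = pos 0 @ w" by (simp add: pos_def)
    then show ?thesis by blast
  qed
qed simp

lemma E_nofalse: "False \<notin> set w \<Longrightarrow> E f w = w" by (simp add: E_def)

lemma pos_app_eq: "pos q @ z = pos p @ y \<Longrightarrow> p = q \<and> z = y"
proof (induction p arbitrary: q)
  case 0 then show ?case by (cases q) (auto simp: pos_def)
next
  case (Suc p) then show ?case by (cases q) (auto simp: pos_def)
qed

lemma E_comp: "E (\<lambda>p. f p \<circ> g p) = E f \<circ> E g"
proof
  fix w show "E (\<lambda>p. f p \<circ> g p) w = (E f \<circ> E g) w"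
  proof (cases "False \<in> set w")
    case True then obtain p z where "w = pos p @ z" using E_decomp by blast
    then show ?thesis by simp
  qed (simp add: E_nofalse)
qed

lemma E_id: "E (\<lambda>p. id) = id"
proof
  fix w show "E (\<lambda>p. id) w = id w"
  proof (cases "False \<in> set w")
    case True then obtain p z where "w = pos p @ z" using E_decomp by blast
    then show ?thesis by simp
  qed (simp add: E_nofalse)
qed

lemma E_inj: assumes "E f = E g" shows "f = g"
proof (intro ext)
  fix p w
  have "pos p @ f p w = pos p @ g p w" using fun_cong[OF assms, of "pos p @ w"] by simp
  then show "f p w = g p w" by simp
qed

lemma E_upd: "E f = lft (pos p) (f p) \<circ> E (f(p := id))"
proof
  fix w show "E f w = (lft (pos p) (f p) \<circ> E (f(p := id))) w"
  proof (cases "False \<in> set w")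
    case True then obtain q z where w: "w = pos q @ z" using E_decomp by blast
    show ?thesis
    proof (cases "q = p")
      case True then show ?thesis using w by simp
    next
      case False
      have "\<not> (\<exists>y. pos q @ f q z = pos p @ y)" using pos_app_eq False by blast
      then show ?thesis using w False lft_nopref by simp
    qed
  next
    case False
    have "\<not> (\<exists>y. w = pos p @ y)" using False by (auto simp: pos_def)
    then show ?thesis using False E_nofalse lft_nopref by simp
  qed
qed

lemma E_Kc_bound: "(\<forall>p. f p \<in> Kc) \<Longrightarrow> (\<forall>p\<ge>N. f p = id) \<Longrightarrow> E f \<in> Kc"
proof (induction N arbitrary: f)
  case 0
  have "f = (\<lambda>p. id)"
  proof (rule ext)
    fix p show "f p = id" using 0 by (simp add: id_def)
  qed
  then show ?case using E_id Kc_id by metis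
next
  case (Suc N)
  have a1: "\<forall>p. (f(N := id)) p \<in> Kc" using Suc.prems(1) Kc_id by (metis fun_upd_apply)
  have a2: "\<forall>p\<ge>N. (f(N := id)) p = id" using Suc.prems(2) by (metis fun_upd_apply le_antisym not_less_eq_eq)
  have "E (f(N := id)) \<in> Kc" using Suc.IH[OF a1 a2] .
  moreover have "lft (pos N) (f N) \<in> Kc" using Kc_lft Suc.prems by auto
  ultimately show ?case using E_upd[of f N] Kc_mult by metis
qed

lemma E_Kc: assumes "\<forall>p. f p \<in> Kc" "finite {p. f p \<noteq> id}" shows "E f \<in> Kc"
proof -
  obtain N where "{p. f p \<noteq> id} \<subseteq> {..<N}" using finite_nat_bounded[OF assms(2)] by blast
  then have "\<forall>p\<ge>N. f p = id" by auto
  then show ?thesis using E_Kc_bound assms(1) by blast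
qed

lemma rep3: "replicate (3 * Suc m) True @ w = True # True # True # (replicate (3 * m) True @ w)"
  by (simp add: numeral_3_eq_3)
lemma rep3': "replicate (3 + k) True @ w = True # True # True # (replicate k True @ w)"
  by (simp add: numeral_3_eq_3)
lemma lft_app2[simp]: "lft (v @ [x]) g (v @ x # y) = v @ x # g y" by (simp add: lft_def)

lemma d_spine: "grig_d (replicate (3 * m) True @ False # w) = replicate (3 * m) True @ False # w"
  by (induction m) (simp_all add: rep3')

lemma d_commute_lft:
  "grig_d \<circ> lft (replicate (3 * m) True @ [False]) g = lft (replicate (3 * m) True @ [False]) g \<circ> grig_d"
proof
  fix w
  let ?u = "replicate (3 * m) True @ [False]"
  show "(grig_d \<circ> lft ?u g) w = (lft ?u g \<circ> grig_d) w"
  proof (cases "\<exists>y. w = ?u @ y")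
    case True then obtain y where w: "w = ?u @ y" by blast
    have "grig_d (?u @ z) = ?u @ z" for z using d_spine[of m z] by simp
    then show ?thesis using w by simp
  next
    case False
    have "\<not> (\<exists>y. grig_d w = ?u @ y)"
    proof
      assume "\<exists>y. grig_d w = ?u @ y"
      then obtain y where "grig_d w = ?u @ y" by blast
      then have "w = grig_d (?u @ y)" by (metis gdd)
      then have "w = ?u @ y" using d_spine[of m y] by simp
      then show False using False by blast
    qed
    then show ?thesis using False lft_nopref by simp
  qed
qed

lemma tree_sec: assumes "tree g" shows "tree (sec g u)"
proof -
  have l: "length (sec g u w) = length w" for w using tree_len[OF assms] by (simp add: sec_def)
  have "take (length v) (sec g u (v @ w)) = sec g u v" for v w
  proof -
    have "g (u @ v @ w) = g (u @ v) @ sec g (u @ v) w" using tree_app[OF assms, of "u @ v" w] by simp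
    moreover have "g (u @ v) = g u @ sec g u v" using tree_app[OF assms] by simp
    ultimately have "g (u @ v @ w) = g u @ sec g u v @ sec g (u @ v) w" by simp
    moreover have "sec g u (v @ w) = drop (length u) (g (u @ v @ w))" by (simp add: sec_def)
    ultimately have "sec g u (v @ w) = sec g u v @ sec g (u @ v) w"
      using tree_len[OF assms, of u] by simp
    then show ?thesis using l by simp
  qed
  then show ?thesis using l by (simp add: tree_def)
qed

lemma inj_sec: assumes "tree g" "inj g" shows "inj (sec g u)"
proof (rule injI)
  fix x y assume "sec g u x = sec g u y"
  then have "g (u @ x) = g (u @ y)" using tree_app[OF assms(1)] by metis
  then show "x = y" using assms(2) by (simp add: inj_eq)
qed

lemma len1: assumes "length w = 1" shows "w = [True] \<or> w = [False]"
proof -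
  obtain x where "w = [x]" using assms by (auto simp: length_Suc_conv)
  then show ?thesis by (cases x) auto
qed

lemma st_step:
  assumes tg: "tree g" and ig: "inj g" and cm: "g \<circ> X1 = X1 \<circ> g"
    and X1T: "\<And>w. X1 (True # w) = True # Y w" and X1F: "\<And>w. X1 (False # w) = False # Z w"
    and C: "\<And>h. tree h \<Longrightarrow> inj h \<Longrightarrow> h \<circ> Y \<noteq> Z \<circ> h"
  shows "g [True] = [True] \<and> g [False] = [False] \<and> tree (sec g [True]) \<and> inj (sec g [True])
     \<and> sec g [True] \<circ> Y = Y \<circ> sec g [True]"
proof -
  let ?h = "sec g [True]"
  have th: "tree ?h" "inj ?h" using tree_sec[OF tg] inj_sec[OF tg ig] by auto
  have gT: "g [True] = [True]"
  proof (rule ccontr)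
    assume "g [True] \<noteq> [True]"
    then have gF: "g [True] = [False]" using len1 tree_len[OF tg, of "[True]"] by auto
    have "?h \<circ> Y = Z \<circ> ?h"
    proof
      fix w
      have "g (X1 (True # w)) = X1 (g (True # w))" using cm by (metis comp_apply)
      then have "g (True # Y w) = X1 (g (True # w))" using X1T by simp
      moreover have "g (True # v) = False # ?h v" for v using tree_app[OF tg, of "[True]" v] gF by simp
      ultimately show "(?h \<circ> Y) w = (Z \<circ> ?h) w" using X1F by simp
    qed
    then show False using C th by blast
  qed
  have gF: "g [False] = [False]"
  proof -
    have "g [False] \<noteq> [True]" using gT ig by (metis inj_eq list.inject)
    then show ?thesis using len1 tree_len[OF tg, of "[False]"] by auto
  qed
  have "?h \<circ> Y = Y \<circ> ?h"
  proof
    fix w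
    have "g (X1 (True # w)) = X1 (g (True # w))" using cm by (metis comp_apply)
    then have "g (True # Y w) = X1 (g (True # w))" using X1T by simp
    moreover have "g (True # v) = True # ?h v" for v using tree_app[OF tg, of "[True]" v] gT by simp
    ultimately show "(?h \<circ> Y) w = (Y \<circ> ?h) w" using X1T by simp
  qed
  then show ?thesis using gT gF th by blast
qed

lemma C_d: "tree h \<Longrightarrow> inj h \<Longrightarrow> h \<circ> grig_b \<noteq> id \<circ> h"
proof
  assume "inj h" "h \<circ> grig_b = id \<circ> h"
  then have "h (grig_b [False, False]) = h [False, False]" by (metis comp_apply id_apply)
  then show False using \<open>inj h\<close> by (simp add: inj_eq)
qed

lemma C_a: assumes "Y [False] = [False]" shows "tree h \<Longrightarrow> inj h \<Longrightarrow> h \<circ> Y \<noteq> grig_a \<circ> h"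
proof
  assume t: "tree h" and e: "h \<circ> Y = grig_a \<circ> h"
  then have "h [False] = grig_a (h [False])" using assms by (metis comp_apply)
  moreover have "length (h [False]) = 1" using tree_len[OF t] by simp
  ultimately show False using len1 by fastforce
qed

lemma spine:
  "\<forall>g. tree g \<and> inj g \<and> g \<circ> grig_d = grig_d \<circ> g \<longrightarrow>
     (\<forall>w. \<exists>z. g (replicate (3 * m) True @ False # w) = replicate (3 * m) True @ False # z)"
proof (induction m)
  case 0
  show ?case
  proof (intro allI impI)
    fix g w assume a: "tree g \<and> inj g \<and> g \<circ> grig_d = grig_d \<circ> g"
    have "g [False] = [False]"
      using st_step[of g grig_d grig_b id] a C_d by simp
    then show "\<exists>z. g (replicate (3 * 0) True @ False # w) = replicate (3 * 0) True @ False # z"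
      using tree_app[of g "[False]" w] a by auto
  qed
next
  case (Suc m)
  show ?case
  proof (intro allI impI)
    fix g w assume a: "tree g \<and> inj g \<and> g \<circ> grig_d = grig_d \<circ> g"
    let ?h1 = "sec g [True]"
    have s1: "g [True] = [True]" "tree ?h1" "inj ?h1" "?h1 \<circ> grig_b = grig_b \<circ> ?h1"
      using st_step[of g grig_d grig_b id] a C_d by auto
    let ?h2 = "sec ?h1 [True]"
    have s2: "?h1 [True] = [True]" "tree ?h2" "inj ?h2" "?h2 \<circ> grig_c = grig_c \<circ> ?h2"
      using st_step[of ?h1 grig_b grig_c grig_a] s1 C_a[of grig_c] by auto
    let ?h3 = "sec ?h2 [True]"
    have s3: "?h2 [True] = [True]" "tree ?h3" "inj ?h3" "?h3 \<circ> grig_d = grig_d \<circ> ?h3"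
      using st_step[of ?h2 grig_c grig_d grig_a] s2 C_a[of grig_d] by auto
    have e1: "g (True # v) = True # ?h1 v" for v using tree_app[of g "[True]" v] a s1 by simp
    have e2: "?h1 (True # v) = True # ?h2 v" for v using tree_app[of ?h1 "[True]" v] s1 s2 by simp
    have e3: "?h2 (True # v) = True # ?h3 v" for v using tree_app[of ?h2 "[True]" v] s2 s3 by simp
    obtain z where "?h3 (replicate (3 * m) True @ False # w) = replicate (3 * m) True @ False # z"
      using Suc.IH s3 by blast
    then show "\<exists>z. g (replicate (3 * Suc m) True @ False # w) = replicate (3 * Suc m) True @ False # z"
      using e1 e2 e3 by (simp add: rep3')
  qed
qed

abbreviation "GG \<equiv> grigorchuk_group"

lemma GG_carrier: "carrier GG = Gc" by (simp add: grigorchuk_group_def)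
lemma GG_mult: "x \<in> Gc \<Longrightarrow> y \<in> Gc \<Longrightarrow> x \<otimes>\<^bsub>GG\<^esub> y = x \<circ> y"
  using BG_mult Gc_good by (simp add: grigorchuk_group_def goodf_def)
lemma GG_one: "\<one>\<^bsub>GG\<^esub> = id" using BG_one by (simp add: grigorchuk_group_def)
lemma GG_group: "group GG"
  unfolding grigorchuk_group_def using group.subgroup_imp_group[OF grp_BG Gc_sub] .
lemma GG_inv: assumes "x \<in> Gc" shows "inv\<^bsub>GG\<^esub> x = hinv x"
proof -
  have "inv\<^bsub>GG\<^esub> x = inv\<^bsub>BG\<^esub> x"
    using group.m_inv_consistent[OF grp_BG Gc_sub assms] by (simp add: grigorchuk_group_def)
  then show ?thesis using BG_inv Gc_good[OF assms] by (simp add: goodf_def)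
qed
lemma GG_generate: "S \<subseteq> Gc \<Longrightarrow> generate GG S = generate BG S"
  unfolding grigorchuk_group_def using group.generate_consistent[OF grp_BG _ Gc_sub] by blast

lemma sec_id: "sec id u = id" by (simp add: sec_def fun_eq_iff)
lemma sec_ident[simp]: "sec (\<lambda>x. x) u = (\<lambda>x. x)" by (simp add: sec_def fun_eq_iff)

lemma sec_mult_fix: assumes "\<forall>w. \<exists>z. y2 (u @ w) = u @ z"
  shows "sec (y1 \<circ> y2) u = sec y1 u \<circ> sec y2 u"
proof
  fix w
  obtain z where z: "y2 (u @ w) = u @ z" using assms by blast
  then have "sec y2 u w = z" by (simp add: sec_def)
  then show "sec (y1 \<circ> y2) u w = (sec y1 u \<circ> sec y2 u) w" using z by (simp add: sec_def)
qed

lemma nfg: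
  fixes v :: "nat \<Rightarrow> bool list"
  assumes Ysub: "subgroup Y GG"
    and fx: "\<forall>y\<in>Y. \<forall>m w. \<exists>z. y (v m @ w) = v m @ z"
    and wit: "\<forall>m m'. m \<noteq> m' \<longrightarrow> (\<exists>y\<in>Y. sec y (v m) \<noteq> sec y (v m'))"
  shows "\<not> fg_subgroup GG Y"
proof
  assume "fg_subgroup GG Y"
  then obtain S where S: "finite S" "S \<subseteq> Y" "generate GG S = Y" by (auto simp: fg_subgroup_def)
  have YG: "Y \<subseteq> Gc" using subgroup.subset[OF Ysub] GG_carrier by simp
  define F where "F m = restrict (\<lambda>s. sec s (v m)) S" for m
  have "range F \<subseteq> (\<Pi>\<^sub>E s\<in>S. range (sec s))" by (auto simp: F_def)
  moreover have "finite (\<Pi>\<^sub>E s\<in>S. range (sec s))"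
    using S YG Gc_good by (intro finite_PiE) (auto simp: goodf_def)
  ultimately have "finite (range F)" using finite_subset by blast
  then have "\<not> inj F" using finite_imageD[of F UNIV] infinite_UNIV_nat by auto
  then obtain m m' where mm: "m \<noteq> m'" "F m = F m'" by (auto simp: inj_def)
  have eqS: "\<forall>s\<in>S. sec s (v m) = sec s (v m')"
  proof
    fix s assume "s \<in> S" then show "sec s (v m) = sec s (v m')" using fun_cong[OF mm(2), of s] by (simp add: F_def)
  qed
  have mult: "y1 \<in> Y \<Longrightarrow> y2 \<in> Y \<Longrightarrow> sec (y1 \<circ> y2) (v k) = sec y1 (v k) \<circ> sec y2 (v k)" for y1 y2 k
    using fx sec_mult_fix by blast
  have "y \<in> generate GG S \<Longrightarrow> sec y (v m) = sec y (v m')" for y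
  proof (induction rule: generate.induct)
    case one then show ?case by (simp add: GG_one sec_id)
  next
    case (incl h) then show ?case using eqS by blast
  next
    case (inv h)
    have hY: "h \<in> Y" using inv S by blast
    have h'Y: "inv\<^bsub>GG\<^esub> h \<in> Y" using subgroup.m_inv_closed[OF Ysub hY] .
    have hG: "h \<in> Gc" "inv\<^bsub>GG\<^esub> h \<in> Gc" using hY h'Y YG by auto
    have c1: "inv\<^bsub>GG\<^esub> h \<circ> h = id" "h \<circ> inv\<^bsub>GG\<^esub> h = id"
      using group.l_inv[OF GG_group, of h] group.r_inv[OF GG_group, of h] GG_mult[OF hG(2) hG(1)]
        GG_mult[OF hG(1) hG(2)] hG(1) GG_one GG_carrier by auto
    let ?h' = "inv\<^bsub>GG\<^esub> h"
    have "sec ?h' (v k) \<circ> sec h (v k) = id" "sec h (v k) \<circ> sec ?h' (v k) = id" for k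
      using mult[OF h'Y hY, of k] mult[OF hY h'Y, of k] c1 sec_id by auto
    then have "sec ?h' (v m) = sec ?h' (v m) \<circ> (sec h (v m') \<circ> sec ?h' (v m'))"
      by simp
    also have "\<dots> = (sec ?h' (v m) \<circ> sec h (v m)) \<circ> sec ?h' (v m')"
      using eqS inv by (simp add: comp_assoc)
    also have "\<dots> = sec ?h' (v m')" using \<open>\<And>k. sec ?h' (v k) \<circ> sec h (v k) = id\<close> by simp
    finally show ?case .
  next
    case (eng h1 h2)
    have "h1 \<in> Y" "h2 \<in> Y" using eng S by auto
    then have "h1 \<otimes>\<^bsub>GG\<^esub> h2 = h1 \<circ> h2" using YG GG_mult by blast
    then show ?case using eng.IH mult[OF \<open>h1 \<in> Y\<close> \<open>h2 \<in> Y\<close>] by metis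
  qed
  moreover obtain y where "y \<in> Y" "sec y (v m) \<noteq> sec y (v m')" using wit mm(1) by blast
  ultimately show False using S by blast
qed

definition phi :: "bool \<Rightarrow> (bool list \<Rightarrow> bool list) \<Rightarrow> bool list \<Rightarrow> bool list" where
  "phi b x = (if b then cd x else x)"

lemma phi_comp: "phi b (x \<circ> y) = phi b x \<circ> phi b y" by (simp add: phi_def cd_comp)
lemma phi_id: "phi b id = id" by (simp add: phi_def cd_id)
lemma phi_Kc: "x \<in> Kc \<Longrightarrow> phi b x \<in> Kc" by (simp add: phi_def Kc_cd)
lemma phi_bij: "bij x \<Longrightarrow> bij (phi b x)" by (simp add: phi_def cd_bij)
lemma phi_inv: assumes "bij x" shows "hinv (phi b x) = phi b (hinv x)"
proof -
  have "phi b (hinv x) \<circ> phi b x = id" using phi_comp[symmetric] inv_comp_id[OF assms] phi_id by metis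
  then show ?thesis using inv_from_comp phi_bij[OF assms] by blast
qed

definition E2 :: "(nat \<Rightarrow> nat \<Rightarrow> bool list \<Rightarrow> bool list) \<Rightarrow> bool list \<Rightarrow> bool list" where
  "E2 F = E (\<lambda>p. case prod_decode p of (t, r) \<Rightarrow> F t r)"

abbreviation "pp t r \<equiv> pos (prod_encode (t, r))"

lemma E2_app[simp]: "E2 F (pp t r @ w) = pp t r @ F t r w"
  by (simp add: E2_def)

lemma E2_comp: "E2 (\<lambda>t r. F t r \<circ> G t r) = E2 F \<circ> E2 G"
  unfolding E2_def using E_comp[of "\<lambda>p. case prod_decode p of (t, r) \<Rightarrow> F t r"
      "\<lambda>p. case prod_decode p of (t, r) \<Rightarrow> G t r"]
  by (simp add: case_prod_beta)

lemma E2_id: "E2 (\<lambda>t r. id) = id"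
  unfolding E2_def using E_id by (simp add: case_prod_beta)

lemma E2_inj: assumes "E2 F = E2 G" shows "F = G"
proof (intro ext)
  fix t r w
  have "pp t r @ F t r w = pp t r @ G t r w" using fun_cong[OF assms, of "pp t r @ w"] by simp
  then show "F t r w = G t r w" by simp
qed

lemma E2_Kc:
  assumes "\<forall>t r. F t r \<in> Kc" "\<forall>t r. (M \<le> t \<or> N \<le> r) \<longrightarrow> F t r = id"
  shows "E2 F \<in> Kc"
proof -
  let ?f = "\<lambda>p. case prod_decode p of (t, r) \<Rightarrow> F t r"
  have "{p. ?f p \<noteq> id} \<subseteq> prod_encode ` ({..<M} \<times> {..<N})"
  proof
    fix p assume "p \<in> {p. ?f p \<noteq> id}"
    obtain t r where tr: "prod_decode p = (t, r)" by (cases "prod_decode p")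
    then have "F t r \<noteq> id" using \<open>p \<in> _\<close> by simp
    then have "t < M" "r < N" using assms(2) by (meson not_le)+
    moreover have "p = prod_encode (t, r)" using tr by (metis prod_decode_inverse)
    ultimately show "p \<in> prod_encode ` ({..<M} \<times> {..<N})" by blast
  qed
  then have fi: "finite {p. ?f p \<noteq> id}" using finite_subset by blast
  have kk: "\<forall>p. ?f p \<in> Kc" using assms(1) by (simp add: case_prod_beta)
  show ?thesis unfolding E2_def by (rule E_Kc[OF kk fi])
qed

lemma sec_E2: "sec (E2 F) (pp t r @ u) = sec (F t r) u"
  by (simp add: sec_def fun_eq_iff)

locale cfg =
  fixes n :: nat and c :: "nat set \<Rightarrow> nat" and Jf :: "nat \<Rightarrow> nat set" and m :: nat
  assumes Jbij: "bij_betw Jf {..<m} {J. J \<subseteq> {1..n} \<and> J \<noteq> {} \<and> c J \<noteq> 0}"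
begin

definition L :: "nat \<Rightarrow> nat list" where "L t = sorted_list_of_set (Jf t)"
definition k :: "nat \<Rightarrow> nat" where "k t = card (Jf t)"

lemma Jf_props: assumes "t < m"
  shows "Jf t \<subseteq> {1..n}" "Jf t \<noteq> {}" "c (Jf t) \<noteq> 0" "finite (Jf t)"
  using Jbij assms finite_subset[of "Jf t" "{1..n}"] by (auto simp: bij_betw_def)

lemma L_props: assumes "t < m"
  shows "set (L t) = Jf t" "length (L t) = k t" "0 < k t" "k t \<le> n"
proof -
  show "set (L t) = Jf t" "length (L t) = k t" using Jf_props[OF assms] by (auto simp: L_def k_def)
  show "0 < k t" using Jf_props[OF assms] by (simp add: k_def card_gt_0_iff)
  show "k t \<le> n" using Jf_props[OF assms] card_mono[of "{1..n}" "Jf t"] by (simp add: k_def)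
qed

definition Edge :: "nat \<Rightarrow> nat \<Rightarrow> (nat \<Rightarrow> nat \<Rightarrow> bool list \<Rightarrow> bool list) \<Rightarrow> bool" where
  "Edge t r F \<longleftrightarrow> F t (Suc r mod k t) = phi (Suc r = k t) (F t r)"

definition Base :: "(nat \<Rightarrow> nat \<Rightarrow> bool list \<Rightarrow> bool list) \<Rightarrow> bool" where
  "Base F \<longleftrightarrow> (\<forall>t r. F t r \<in> Kc) \<and> (\<forall>t r. (m \<le> t \<or> k t \<le> r) \<longrightarrow> F t r = id)"

definition S :: "nat \<Rightarrow> (nat \<Rightarrow> nat \<Rightarrow> bool list \<Rightarrow> bool list) set" where
  "S i = {F. Base F \<and> (\<forall>t<m. (i \<in> Jf t \<longrightarrow> (\<forall>r<k t. L t ! r = i \<longrightarrow> Edge t r F))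
                          \<and> (i \<notin> Jf t \<longrightarrow> (\<forall>r. F t r = id)))}"

definition Hs :: "nat \<Rightarrow> (bool list \<Rightarrow> bool list) set" where "Hs i = E2 ` S i"

lemma mem_IntS: assumes "I \<noteq> {}"
  shows "F \<in> (\<Inter>i\<in>I. S i) \<longleftrightarrow> Base F \<and> (\<forall>t<m. (\<forall>r<k t. L t ! r \<in> I \<longrightarrow> Edge t r F)
            \<and> (\<not> I \<subseteq> Jf t \<longrightarrow> (\<forall>r. F t r = id)))"
proof
  assume F: "F \<in> (\<Inter>i\<in>I. S i)"
  obtain i0 where "i0 \<in> I" using assms by blast
  then have "Base F" using F by (auto simp: S_def)
  moreover have "\<forall>t<m. (\<forall>r<k t. L t ! r \<in> I \<longrightarrow> Edge t r F) \<and> (\<not> I \<subseteq> Jf t \<longrightarrow> (\<forall>r. F t r = id))"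
  proof (intro allI impI conjI)
    fix t r assume t: "t < m" and r: "r < k t" and "L t ! r \<in> I"
    moreover have "L t ! r \<in> Jf t" using L_props[OF t] r nth_mem by metis
    ultimately show "Edge t r F" using F by (auto simp: S_def)
  next
    fix t r assume t: "t < m" and "\<not> I \<subseteq> Jf t"
    then obtain i where "i \<in> I" "i \<notin> Jf t" by blast
    then show "F t r = id" using F t by (auto simp: S_def)
  qed
  ultimately show "Base F \<and> (\<forall>t<m. (\<forall>r<k t. L t ! r \<in> I \<longrightarrow> Edge t r F)
            \<and> (\<not> I \<subseteq> Jf t \<longrightarrow> (\<forall>r. F t r = id)))" by blast
next
  assume F: "Base F \<and> (\<forall>t<m. (\<forall>r<k t. L t ! r \<in> I \<longrightarrow> Edge t r F)
            \<and> (\<not> I \<subseteq> Jf t \<longrightarrow> (\<forall>r. F t r = id)))"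
  show "F \<in> (\<Inter>i\<in>I. S i)"
  proof
    fix i assume i: "i \<in> I"
    show "F \<in> S i" unfolding S_def using F i by blast
  qed
qed

lemma E2_S_Kc: "Base F \<Longrightarrow> E2 F \<in> Kc"
  unfolding Base_def
proof (elim conjE, rule E2_Kc)
  assume a: "\<forall>t r. F t r \<in> Kc" "\<forall>t r. m \<le> t \<or> k t \<le> r \<longrightarrow> F t r = id"
  show "\<forall>t r. F t r \<in> Kc" by (rule a(1))
  show "\<forall>t r. m \<le> t \<or> n \<le> r \<longrightarrow> F t r = id"
  proof (intro allI impI)
    fix t r assume "m \<le> t \<or> n \<le> r"
    then show "F t r = id" using a(2) L_props(4)[of t] by (meson le_trans not_le)
  qed
qed

end

lemma hinv_id: "hinv id = id" by (simp add: inv_id)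

context cfg begin

lemma S_comp: assumes "F \<in> S i" "G \<in> S i" shows "(\<lambda>t r. F t r \<circ> G t r) \<in> S i"
proof -
  have b: "Base (\<lambda>t r. F t r \<circ> G t r)"
    using assms Kc_mult unfolding S_def Base_def by auto
  have "\<forall>t<m. (i \<in> Jf t \<longrightarrow> (\<forall>r<k t. L t ! r = i \<longrightarrow> Edge t r (\<lambda>t r. F t r \<circ> G t r)))
                          \<and> (i \<notin> Jf t \<longrightarrow> (\<forall>r. F t r \<circ> G t r = id))"
    using assms unfolding S_def Edge_def by (auto simp: phi_comp)
  then show ?thesis using b by (simp add: S_def)
qed

lemma S_one: "(\<lambda>t r. id) \<in> S i"
  unfolding S_def Base_def Edge_def using Kc_id phi_id by auto

lemma S_inv: assumes "F \<in> S i" shows "(\<lambda>t r. hinv (F t r)) \<in> S i"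
proof -
  have bij: "bij (F t r)" for t r using assms Kc_good unfolding S_def Base_def goodf_def by blast
  have b: "Base (\<lambda>t r. hinv (F t r))"
    using assms Kc_inv hinv_id unfolding S_def Base_def by auto
  have "\<forall>t<m. (i \<in> Jf t \<longrightarrow> (\<forall>r<k t. L t ! r = i \<longrightarrow> Edge t r (\<lambda>t r. hinv (F t r))))
                          \<and> (i \<notin> Jf t \<longrightarrow> (\<forall>r. hinv (F t r) = id))"
    using assms hinv_id phi_inv[OF bij] unfolding S_def Edge_def by auto
  then show ?thesis using b by (simp add: S_def)
qed

lemma S_Base: "F \<in> S i \<Longrightarrow> Base F" by (simp add: S_def)

lemma E2_bij: "Base F \<Longrightarrow> bij (E2 F)"
  using E2_S_Kc Kc_good goodf_def by blast

lemma E2_hinv: assumes "Base F" shows "hinv (E2 F) = E2 (\<lambda>t r. hinv (F t r))"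
proof -
  have bij: "bij (F t r)" for t r using assms Kc_good unfolding Base_def goodf_def by blast
  have "E2 (\<lambda>t r. hinv (F t r)) \<circ> E2 F = id"
    using E2_comp[of "\<lambda>t r. hinv (F t r)" F, symmetric] inv_comp_id(1)[OF bij] E2_id by simp
  then show ?thesis using inv_from_comp E2_bij[OF assms] by blast
qed

lemma Hs_sub: "subgroup (Hs i) GG"
proof (rule group.subgroupI[OF GG_group])
  show "Hs i \<subseteq> carrier GG" unfolding Hs_def GG_carrier using E2_S_Kc S_Base Kc_sub_Gc by blast
  show "Hs i \<noteq> {}" unfolding Hs_def using S_one by blast
next
  fix a assume "a \<in> Hs i"
  then obtain F where F: "F \<in> S i" "a = E2 F" by (auto simp: Hs_def)
  then have "a \<in> Gc" using E2_S_Kc S_Base Kc_sub_Gc by blast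
  then have "inv\<^bsub>GG\<^esub> a = E2 (\<lambda>t r. hinv (F t r))" using GG_inv E2_hinv S_Base F by simp
  then show "inv\<^bsub>GG\<^esub> a \<in> Hs i" using S_inv[OF F(1)] by (simp add: Hs_def)
next
  fix a b assume "a \<in> Hs i" "b \<in> Hs i"
  then obtain F G where F: "F \<in> S i" "a = E2 F" "G \<in> S i" "b = E2 G" by (auto simp: Hs_def)
  then have "a \<in> Gc" "b \<in> Gc" using E2_S_Kc S_Base Kc_sub_Gc by blast+
  then have "a \<otimes>\<^bsub>GG\<^esub> b = E2 (\<lambda>t r. F t r \<circ> G t r)" using GG_mult E2_comp F by simp
  then show "a \<otimes>\<^bsub>GG\<^esub> b \<in> Hs i" using S_comp[OF F(1) F(3)] by (simp add: Hs_def)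
qed

lemma Int_eq: assumes "I \<noteq> {}" shows "(\<Inter>i\<in>I. Hs i) = E2 ` (\<Inter>i\<in>I. S i)"
proof -
  have "inj_on E2 UNIV" using E2_inj by (meson injI)
  then show ?thesis unfolding Hs_def using image_INT[of E2 UNIV I S] assms by blast
qed

lemma Int_sub: assumes "I \<noteq> {}" shows "subgroup (\<Inter>i\<in>I. Hs i) GG"
  using group.subgroups_Inter[OF GG_group, of "Hs ` I"] Hs_sub assms by auto

end

lemma modK: "(x + K) mod K = x mod (K::nat)" by (rule mod_add_self2)
lemma ar1: assumes "a < K" "r < (K::nat)" shows "(Suc a + (r + K - Suc a) mod K) mod K = r"
proof (cases "Suc a \<le> r")
  case True
  have h1: "r + K - Suc a = (r - Suc a) + K" using True by linarith
  have h3: "(r - Suc a) mod K = r - Suc a" using assms by (intro mod_less) linarith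
  have h4: "Suc a + (r - Suc a) = r" using True by linarith
  show ?thesis by (simp only: h1 modK h3 h4 mod_less[OF assms(2)])
next
  case False
  have h1: "(r + K - Suc a) mod K = r + K - Suc a" using False assms by (intro mod_less) linarith
  have h2: "Suc a + (r + K - Suc a) = r + K" using False assms by linarith
  show ?thesis by (simp only: h1 h2 modK mod_less[OF assms(2)])
qed
lemma ar2: assumes "a < K" "r < (K::nat)" "r \<noteq> a" shows "Suc ((r + K - Suc a) mod K) < K"
proof (cases "Suc a \<le> r")
  case True
  have h1: "r + K - Suc a = (r - Suc a) + K" using True by linarith
  have h3: "(r - Suc a) mod K = r - Suc a" using assms by (intro mod_less) linarith
  show ?thesis unfolding h1 modK h3 using assms True by linarith
next
  case False
  have h1: "(r + K - Suc a) mod K = r + K - Suc a" using False assms by (intro mod_less) linarith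
  show ?thesis unfolding h1 using False assms by linarith
qed
lemma ar3: assumes "a < K" "r < (K::nat)" "r \<noteq> a"
  shows "(Suc r mod K + K - Suc a) mod K = Suc ((r + K - Suc a) mod K)"
proof (cases "Suc r < K")
  case True
  have sr: "Suc r mod K = Suc r" using True by (rule mod_less)
  show ?thesis
  proof (cases "a < r")
    case True
    have h1: "r + K - Suc a = (r - Suc a) + K" "Suc r + K - Suc a = (r - a) + K" using True by linarith+
    have h3: "(r - Suc a) mod K = r - Suc a" "(r - a) mod K = r - a" using assms by (intro mod_less; linarith)+
    show ?thesis unfolding sr h1 modK h3 using True by linarith
  next
    case False
    then have "r < a" using assms by linarith
    have h1: "(r + K - Suc a) mod K = r + K - Suc a" using \<open>r < a\<close> assms by (intro mod_less) linarith
    have h2: "(Suc r + K - Suc a) mod K = Suc r + K - Suc a" using \<open>r < a\<close> assms by (intro mod_less) linarith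
    show ?thesis unfolding sr h1 h2 using \<open>r < a\<close> assms by linarith
  qed
next
  case False
  then have rK: "Suc r = K" using assms by linarith
  then have sr: "Suc r mod K = 0" by simp
  have "a < r" using assms rK by linarith
  have h1: "r + K - Suc a = (r - Suc a) + K" using \<open>a < r\<close> by linarith
  have h3: "(r - Suc a) mod K = r - Suc a" using assms by (intro mod_less) linarith
  have h4: "(K - Suc a) mod K = K - Suc a" using assms by (intro mod_less) linarith
  show ?thesis unfolding sr add.left_neutral h1 modK h3 h4 using rK \<open>a < r\<close> by linarith
qed
lemma ar4: "(Suc a + Suc j) mod (K::nat) = Suc ((Suc a + j) mod K) mod K"
  by (simp only: mod_Suc_eq add_Suc_right)

locale fgc = cfg +
  fixes I :: "nat set"
  assumes Ine: "I \<noteq> {}"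
    and cut: "\<forall>t<m. I \<subseteq> Jf t \<longrightarrow> (\<exists>r<k t. L t ! r \<notin> I)"
begin

definition r0 :: "nat \<Rightarrow> nat" where "r0 t = (SOME r. r < k t \<and> L t ! r \<notin> I)"

lemma r0: assumes "t < m" "I \<subseteq> Jf t" shows "r0 t < k t" "L t ! r0 t \<notin> I"
  using someI_ex[OF cut[rule_format, OF assms]] unfolding r0_def by auto

fun prp :: "nat \<Rightarrow> nat \<Rightarrow> (nat \<Rightarrow> nat \<Rightarrow> bool list \<Rightarrow> bool list) \<Rightarrow> bool list \<Rightarrow> bool list" where
  "prp t 0 F = F t (Suc (r0 t) mod k t)"
| "prp t (Suc j) F = (if L t ! ((Suc (r0 t) + j) mod k t) \<in> I
     then phi (Suc ((Suc (r0 t) + j) mod k t) = k t) (prp t j F)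
     else F t ((Suc (r0 t) + Suc j) mod k t))"

definition jj :: "nat \<Rightarrow> nat \<Rightarrow> nat" where "jj t r = (r + k t - Suc (r0 t)) mod k t"

definition Phi :: "(nat \<Rightarrow> nat \<Rightarrow> bool list \<Rightarrow> bool list) \<Rightarrow> nat \<Rightarrow> nat \<Rightarrow> bool list \<Rightarrow> bool list" where
  "Phi F = (\<lambda>t r. if t < m \<and> r < k t \<and> I \<subseteq> Jf t then prp t (jj t r) F else id)"

lemma phi_comp': "phi b (\<lambda>a. x (y a)) = (\<lambda>a. phi b x (phi b y a))"
  using phi_comp[of b x y] by (simp add: comp_def)

lemma phi_ident: "phi b (\<lambda>a. a) = (\<lambda>a. a)"
  using phi_id[of b] by (simp add: id_def)

lemma prp_comp: "prp t j (\<lambda>t r. F t r \<circ> G t r) = prp t j F \<circ> prp t j G"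
  by (induction j) (simp_all add: phi_comp phi_comp')

lemma Phi_comp: "Phi (\<lambda>t r. F t r \<circ> G t r) = (\<lambda>t r. Phi F t r \<circ> Phi G t r)"
  by (simp add: Phi_def prp_comp fun_eq_iff)

lemma prp_id: "prp t j (\<lambda>t r. id) = id"
  by (induction j) (simp_all add: phi_id phi_ident)

lemma Phi_id: "Phi (\<lambda>t r. id) = (\<lambda>t r. id)"
  by (simp add: Phi_def prp_id fun_eq_iff)

lemma prp_Kc: "\<forall>t r. F t r \<in> Kc \<Longrightarrow> prp t j F \<in> Kc"
  by (induction j) (simp_all add: phi_Kc)

lemma prp_bij: "\<forall>t r. bij (F t r) \<Longrightarrow> bij (prp t j F)"
  by (induction j) (simp_all add: phi_bij)

lemma Phi_bij: "\<forall>t r. bij (F t r) \<Longrightarrow> bij (Phi F t r)"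
  by (simp add: Phi_def prp_bij)

lemma Phi_Base: assumes "\<forall>t r. F t r \<in> Kc" shows "Base (Phi F)"
  unfolding Base_def Phi_def using prp_Kc[OF assms] Kc_id by auto

lemma Phi_in: assumes "\<forall>t r. F t r \<in> Kc" shows "Phi F \<in> (\<Inter>i\<in>I. S i)"
proof -
  have "\<forall>t<m. (\<forall>r<k t. L t ! r \<in> I \<longrightarrow> Edge t r (Phi F)) \<and> (\<not> I \<subseteq> Jf t \<longrightarrow> (\<forall>r. Phi F t r = id))"
  proof (intro allI impI conjI)
    fix t r assume t: "t < m" and r: "r < k t" and rI: "L t ! r \<in> I"
    show "Edge t r (Phi F)"
    proof (cases "I \<subseteq> Jf t")
      case False then show ?thesis by (simp add: Edge_def Phi_def phi_id)
    next
      case True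
      note a = r0[OF t True]
      have rne: "r \<noteq> r0 t" using a rI by auto
      have kp: "0 < k t" using L_props[OF t] by simp
      have s: "Suc r mod k t < k t" by (rule mod_less_divisor[OF kp])
      have j1: "jj t (Suc r mod k t) = Suc (jj t r)" unfolding jj_def using ar3[OF a(1) r rne] .
      have j2: "(Suc (r0 t) + jj t r) mod k t = r" unfolding jj_def using ar1[OF a(1) r] .
      show ?thesis unfolding Edge_def Phi_def using t r s True j1 j2 rI by simp
    qed
  next
    fix t r assume "t < m" "\<not> I \<subseteq> Jf t"
    then show "Phi F t r = id" by (simp add: Phi_def)
  qed
  then show ?thesis using mem_IntS[OF Ine] Phi_Base[OF assms] by blast
qed

lemma prp_fix: assumes F: "F \<in> (\<Inter>i\<in>I. S i)" and t: "t < m" and IJ: "I \<subseteq> Jf t"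
  shows "prp t j F = F t ((Suc (r0 t) + j) mod k t)"
proof (induction j)
  case 0 then show ?case by simp
next
  case (Suc j)
  let ?s = "(Suc (r0 t) + j) mod k t"
  have kp: "0 < k t" using L_props[OF t] by simp
  have s: "?s < k t" by (rule mod_less_divisor[OF kp])
  have e: "(Suc (r0 t) + Suc j) mod k t = Suc ?s mod k t" using ar4 .
  show ?case
  proof (cases "L t ! ?s \<in> I")
    case True
    then have "Edge t ?s F" using F mem_IntS[OF Ine] t s by blast
    then show ?thesis using True Suc e by (simp add: Edge_def)
  next
    case False then show ?thesis by simp
  qed
qed

lemma Phi_fix: assumes F: "F \<in> (\<Inter>i\<in>I. S i)" shows "Phi F = F"
proof (intro ext)
  fix t r w
  have B: "Base F" and C: "\<forall>t<m. \<not> I \<subseteq> Jf t \<longrightarrow> (\<forall>r. F t r = id)"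
    using F mem_IntS[OF Ine] by blast+
  show "Phi F t r w = F t r w"
  proof (cases "t < m \<and> r < k t \<and> I \<subseteq> Jf t")
    case True
    then have "Phi F t r = F t ((Suc (r0 t) + jj t r) mod k t)"
      using prp_fix[OF F] by (simp add: Phi_def)
    also have "\<dots> = F t r" unfolding jj_def using ar1[OF r0(1)] True by metis
    finally show ?thesis by simp
  next
    case False
    have "F t r = id"
    proof (cases "t < m \<and> r < k t")
      case True then have "\<not> I \<subseteq> Jf t" using False by blast
      then show ?thesis using C True by blast
    next
      case False then show ?thesis using B unfolding Base_def by (meson not_le)
    qed
    moreover have "Phi F t r = id" using False unfolding Phi_def by (simp only: if_False)
    ultimately show ?thesis by simp
  qed
qed

end

lemma E2_bij': assumes "\<forall>t r. bij (F t r)" shows "bij (E2 F)"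
proof -
  have e1: "(\<lambda>t r. hinv (F t r) \<circ> F t r) = (\<lambda>t r. id)" "(\<lambda>t r. F t r \<circ> hinv (F t r)) = (\<lambda>t r. id)"
  proof (rule ext, rule ext)
    fix t r show "hinv (F t r) \<circ> F t r = id" using inv_comp_id(1) assms by blast
  next
    show "(\<lambda>t r. F t r \<circ> hinv (F t r)) = (\<lambda>t r. id)"
    proof (rule ext, rule ext)
      fix t r show "F t r \<circ> hinv (F t r) = id" using inv_comp_id(2) assms by blast
    qed
  qed
  have "E2 (\<lambda>t r. hinv (F t r)) \<circ> E2 F = id" "E2 F \<circ> E2 (\<lambda>t r. hinv (F t r)) = id"
    using E2_comp[of "\<lambda>t r. hinv (F t r)" F, symmetric] E2_comp[of F "\<lambda>t r. hinv (F t r)", symmetric]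
      e1 E2_id by metis+
  then show ?thesis using o_bij by blast
qed

definition dl :: "nat \<Rightarrow> nat \<Rightarrow> (bool list \<Rightarrow> bool list) \<Rightarrow> nat \<Rightarrow> nat \<Rightarrow> bool list \<Rightarrow> bool list" where
  "dl t r s = (\<lambda>t' r'. if t' = t \<and> r' = r then s else id)"

lemma dl_comp: "dl t r (f \<circ> g) = (\<lambda>t' r'. dl t r f t' r' \<circ> dl t r g t' r')"
  by (simp add: dl_def fun_eq_iff)

lemma dl_id: "dl t r id = (\<lambda>t' r'. id)" by (simp add: dl_def fun_eq_iff)

context fgc begin

definition Pos :: "(nat \<times> nat) set" where "Pos = {(t, r). t < m \<and> r < k t}"

definition Tgen :: "(bool list \<Rightarrow> bool list) set" where
  "Tgen = (\<lambda>((t, r), s). E2 (Phi (dl t r s))) ` (Pos \<times> {tt, uu, vv})"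

lemma Pos_fin: "finite Pos"
proof -
  have "Pos \<subseteq> {..<m} \<times> {..<n}" using L_props(4) by (auto simp: Pos_def) (meson less_le_trans)
  then show ?thesis using finite_subset by blast
qed

lemma dl_Kc: "s \<in> Kc \<Longrightarrow> \<forall>t' r'. dl t r s t' r' \<in> Kc" using Kc_id by (simp add: dl_def)

lemma gen_dl: assumes "(t, r) \<in> Pos" "s \<in> Kc" shows "E2 (Phi (dl t r s)) \<in> generate BG Tgen"
proof -
  let ?h = "\<lambda>s. E2 (Phi (dl t r s))"
  have hc: "?h (f \<circ> g) = ?h f \<circ> ?h g" for f g
    using dl_comp[of t r f g] Phi_comp E2_comp by simp
  have hid: "?h id = id" using dl_id Phi_id E2_id by simp
  have hb: "bij (?h f)" if "bij f" for f
  proof -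
    have "\<forall>t' r'. bij (dl t r f t' r')" using that by (simp add: dl_def)
    then show ?thesis using Phi_bij E2_bij' by blast
  qed
  have T: "{tt, uu, vv} \<subseteq> carrier BG" using words_Kc Kc_good by (auto simp: goodf_def BG_carrier)
  have "?h s \<in> generate BG (?h ` {tt, uu, vv})"
    using gen_hom[of ?h, OF hc hid hb T] assms(2) unfolding Kc_def by blast
  also have "\<dots> \<subseteq> generate BG Tgen"
  proof (intro group.mono_generate[OF grp_BG] subsetI)
    fix x assume "x \<in> ?h ` {tt, uu, vv}"
    then obtain s' where s': "s' \<in> {tt, uu, vv}" "x = ?h s'" by blast
    show "x \<in> Tgen" unfolding Tgen_def using assms(1) s' by (intro image_eqI[where x="((t, r), s')"]) auto
  qed
  finally show ?thesis .
qed

lemma Tgen_sub: "Tgen \<subseteq> E2 ` (\<Inter>i\<in>I. S i)"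
proof
  fix x assume "x \<in> Tgen"
  then obtain t r s where ts: "s \<in> {tt, uu, vv}" "x = E2 (Phi (dl t r s))" by (auto simp: Tgen_def)
  then have "s \<in> Kc" using words_Kc by auto
  then have "Phi (dl t r s) \<in> (\<Inter>i\<in>I. S i)" using Phi_in dl_Kc by presburger
  then show "x \<in> E2 ` (\<Inter>i\<in>I. S i)" using ts(2) by (simp only: image_eqI)
qed

lemma gen_carrier: "generate BG Tgen \<subseteq> carrier BG"
proof -
  have "Tgen \<subseteq> carrier BG"
  proof
    fix x assume "x \<in> Tgen"
    then obtain F where F: "F \<in> (\<Inter>i\<in>I. S i)" "x = E2 F" using Tgen_sub by blast
    obtain i where "i \<in> I" using Ine by blast
    then have "Base F" using F S_Base by blast
    then show "x \<in> carrier BG" using F E2_S_Kc Kc_good by (auto simp: goodf_def BG_carrier)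
  qed
  then show ?thesis using group.generate_in_carrier[OF grp_BG] by blast
qed

lemma restr_gen: assumes F: "F \<in> (\<Inter>i\<in>I. S i)"
  shows "finite P \<Longrightarrow> P \<subseteq> Pos \<Longrightarrow> E2 (Phi (\<lambda>t r. if (t, r) \<in> P then F t r else id)) \<in> generate BG Tgen"
proof (induction P rule: finite_induct)
  case empty
  have "(\<lambda>t r. if (t, r) \<in> {} then F t r else id) = (\<lambda>t r. id)" by (metis empty_iff)
  then have "E2 (Phi (\<lambda>t r. if (t, r) \<in> {} then F t r else id)) = id" using Phi_id E2_id by metis
  then show ?case using generate.one[of BG Tgen] BG_one by metis
next
  case (insert x P)
  obtain t r where x: "x = (t, r)" by (cases x)
  have B: "Base F" using F mem_IntS[OF Ine] by blast
  have FK: "F t r \<in> Kc" using B by (simp add: Base_def)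
  have eq: "(\<lambda>t' r'. if (t', r') \<in> insert x P then F t' r' else id)
      = (\<lambda>t' r'. dl t r (F t r) t' r' \<circ> (if (t', r') \<in> P then F t' r' else id))"
    using insert(2) x by (auto simp: dl_def fun_eq_iff)
  have a: "E2 (Phi (dl t r (F t r))) \<in> generate BG Tgen" using gen_dl insert(4) x FK by auto
  have b: "E2 (Phi (\<lambda>t r. if (t, r) \<in> P then F t r else id)) \<in> generate BG Tgen" using insert by auto
  have bb: "bij (E2 (Phi (dl t r (F t r))))" "bij (E2 (Phi (\<lambda>t r. if (t, r) \<in> P then F t r else id)))"
    using a b gen_carrier BG_carrier by auto
  have gm: "monoid.mult BG (E2 (Phi (dl t r (F t r)))) (E2 (Phi (\<lambda>t r. if (t, r) \<in> P then F t r else id))) \<in> generate BG Tgen"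
    by (rule generate.eng[OF a b])
  have "E2 (Phi (dl t r (F t r))) \<circ> E2 (Phi (\<lambda>t r. if (t, r) \<in> P then F t r else id)) \<in> generate BG Tgen"
    using gm unfolding BG_mult[OF bb] .
  then show ?case unfolding eq Phi_comp E2_comp .
qed

lemma fg_case: "fg_subgroup GG (\<Inter>i\<in>I. Hs i)"
proof -
  let ?Y = "\<Inter>i\<in>I. Hs i"
  have Y: "?Y = E2 ` (\<Inter>i\<in>I. S i)" using Int_eq[OF Ine] .
  have sub: "subgroup ?Y GG" using Int_sub[OF Ine] .
  have TY: "Tgen \<subseteq> ?Y" using Tgen_sub Y by simp
  have YG: "?Y \<subseteq> Gc" using subgroup.subset[OF sub] GG_carrier by simp
  have g1: "generate GG Tgen = generate BG Tgen" using GG_generate TY YG by blast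
  have "generate GG Tgen \<subseteq> ?Y" using group.generate_subgroup_incl[OF GG_group TY sub] .
  moreover have "?Y \<subseteq> generate BG Tgen"
  proof
    fix y assume "y \<in> ?Y"
    then obtain F where F: "F \<in> (\<Inter>i\<in>I. S i)" "y = E2 F" using Y by blast
    have B: "Base F" using F mem_IntS[OF Ine] by blast
    have "(\<lambda>t r. if (t, r) \<in> Pos then F t r else id) = F"
      using B by (auto simp: Base_def Pos_def fun_eq_iff not_le)
    then have "E2 (Phi F) \<in> generate BG Tgen" using restr_gen[OF F(1) Pos_fin] by auto
    then show "y \<in> generate BG Tgen" using Phi_fix[OF F(1)] F(2) by simp
  qed
  ultimately have "generate GG Tgen = ?Y" using g1 by auto
  moreover have "finite Tgen" unfolding Tgen_def using Pos_fin by simp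
  ultimately show ?thesis using sub TY by (auto simp: fg_subgroup_def)
qed

end

lemma sec_lft_same: "sec (lft u g) u = g" by (simp add: sec_def fun_eq_iff)

lemma sec_lft_other: assumes "p \<noteq> q" shows "sec (lft (pos p) g) (pos q) = id"
proof
  fix w
  have "\<not> (\<exists>y. pos q @ w = pos p @ y)" using pos_app_eq assms by blast
  then show "sec (lft (pos p) g) (pos q) w = id w" using lft_nopref by (simp add: sec_def)
qed

lemma pos_rep: "pos p @ w = replicate p True @ False # w" by (simp add: pos_def)

lemma tt_ne: "tt \<noteq> id"
proof
  assume "tt = id"
  then have "tt [False, False] = [False, False]" by simp
  then show False by (simp add: tt_def)
qed

definition xw :: "nat \<Rightarrow> bool list \<Rightarrow> bool list" where "xw j = lft (pos (3 * j)) tt"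

lemma xw_Kc: "xw j \<in> Kc" unfolding xw_def using Kc_lft words_Kc by blast

lemma xw_cd: "cd (xw j) = xw j"
proof -
  have "grig_d \<circ> xw j = xw j \<circ> grig_d" unfolding xw_def pos_def by (rule d_commute_lft)
  then have "grig_d \<circ> xw j \<circ> grig_d = xw j \<circ> (grig_d \<circ> grig_d)" by (simp add: comp_assoc)
  then show ?thesis using dd_id by (simp add: cd_def)
qed

lemma phi_xw: "phi b (xw j) = xw j" using xw_cd by (simp add: phi_def)

context cfg begin

lemma block_const: assumes F: "F \<in> (\<Inter>i\<in>Jf t0. S i)" and t0: "t0 < m"
  shows "r < k t0 \<Longrightarrow> F t0 r = F t0 0"
proof (induction r)
  case 0 then show ?case by simp
next
  case (Suc r)
  have ne: "Jf t0 \<noteq> {}" using Jf_props[OF t0] by simp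
  have "L t0 ! r \<in> Jf t0" using L_props[OF t0] Suc.prems nth_mem by (metis Suc_lessD)
  then have "Edge t0 r F" using F mem_IntS[OF ne] t0 Suc.prems by simp
  then have "F t0 (Suc r) = F t0 r" using Suc.prems by (simp add: Edge_def phi_def)
  then show ?case using Suc by simp
qed

lemma block_cd: assumes F: "F \<in> (\<Inter>i\<in>Jf t0. S i)" and t0: "t0 < m"
  shows "cd (F t0 0) = F t0 0"
proof -
  have ne: "Jf t0 \<noteq> {}" using Jf_props[OF t0] by simp
  have kp: "0 < k t0" using L_props[OF t0] by simp
  let ?r = "k t0 - 1"
  have r: "?r < k t0" "Suc ?r = k t0" using kp by auto
  have "L t0 ! ?r \<in> Jf t0" using L_props[OF t0] r nth_mem by metis
  then have "Edge t0 ?r F" using F mem_IntS[OF ne] t0 r by simp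
  then have "F t0 0 = cd (F t0 ?r)" using r by (simp add: Edge_def phi_def)
  also have "F t0 ?r = F t0 0" using block_const[OF F t0 r(1)] .
  finally show ?thesis by simp
qed

lemma nfg_case: assumes t0: "t0 < m" shows "\<not> fg_subgroup GG (\<Inter>i\<in>Jf t0. Hs i)"
proof -
  let ?I = "Jf t0"
  have ne: "?I \<noteq> {}" using Jf_props[OF t0] by simp
  let ?Y = "\<Inter>i\<in>?I. Hs i"
  have Y: "?Y = E2 ` (\<Inter>i\<in>?I. S i)" using Int_eq[OF ne] .
  define v where "v j = pp t0 0 @ pos (3 * j)" for j
  show ?thesis
  proof (rule nfg[of ?Y v])
    show "subgroup ?Y GG" using Int_sub[OF ne] .
    show "\<forall>y\<in>?Y. \<forall>j w. \<exists>z. y (v j @ w) = v j @ z"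
    proof (intro ballI allI)
      fix y j w assume "y \<in> ?Y"
      then obtain F where F: "F \<in> (\<Inter>i\<in>?I. S i)" "y = E2 F" using Y by blast
      let ?g = "F t0 0"
      have B: "Base F" using F mem_IntS[OF ne] by blast
      then have gK: "?g \<in> Kc" by (simp add: Base_def)
      have tg: "tree ?g" "inj ?g" using Kc_good[OF gK] by (auto simp: goodf_def bij_def)
      have "cd ?g = ?g" using block_cd[OF F(1) t0] .
      then have "grig_d \<circ> ?g \<circ> grig_d = ?g" by (simp add: cd_def)
      then have "grig_d \<circ> ?g \<circ> grig_d \<circ> grig_d = ?g \<circ> grig_d" by simp
      then have cm: "?g \<circ> grig_d = grig_d \<circ> ?g" using dd_id by (simp add: comp_assoc)
      obtain z where "?g (pos (3 * j) @ w) = pos (3 * j) @ z"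
        using spine[of j] tg cm unfolding pos_rep by blast
      then have "y (v j @ w) = v j @ z" using F(2) by (simp add: v_def)
      then show "\<exists>z. y (v j @ w) = v j @ z" by blast
    qed
    show "\<forall>j j'. j \<noteq> j' \<longrightarrow> (\<exists>y\<in>?Y. sec y (v j) \<noteq> sec y (v j'))"
    proof (intro allI impI)
      fix j j' :: nat assume jj: "j \<noteq> j'"
      define W where "W = (\<lambda>t r. if t = t0 \<and> r < k t0 then xw j else id)"
      have WB: "Base W" unfolding Base_def W_def using xw_Kc Kc_id t0 by auto
      have "W \<in> (\<Inter>i\<in>?I. S i)"
      proof -
        have "\<forall>t<m. (\<forall>r<k t. L t ! r \<in> ?I \<longrightarrow> Edge t r W) \<and> (\<not> ?I \<subseteq> Jf t \<longrightarrow> (\<forall>r. W t r = id))"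
        proof (intro allI impI conjI)
          fix t r assume t: "t < m" "r < k t" "L t ! r \<in> ?I"
          have kp: "0 < k t" using L_props[OF t(1)] by simp
          have sm: "Suc r mod k t < k t" by (rule mod_less_divisor[OF kp])
          show "Edge t r W"
          proof (cases "t = t0")
            case True then show ?thesis using t sm by (simp add: Edge_def W_def phi_xw)
          next
            case False then show ?thesis by (simp add: Edge_def W_def phi_id)
          qed
        next
          fix t r assume "t < m" "\<not> ?I \<subseteq> Jf t"
          then have "t \<noteq> t0" by blast
          then show "W t r = id" by (simp add: W_def)
        qed
        then show ?thesis using mem_IntS[OF ne] WB by blast
      qed
      then have yY: "E2 W \<in> ?Y" using Y by blast
      have kp: "0 < k t0" using L_props[OF t0] by simp
      have W0: "W t0 0 = xw j" using kp by (simp add: W_def)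
      have "sec (E2 W) (v j) = tt" unfolding v_def sec_E2 W0 xw_def by (rule sec_lft_same)
      moreover have "sec (E2 W) (v j') = id" unfolding v_def sec_E2 W0 xw_def
        using jj by (intro sec_lft_other) simp
      ultimately show "\<exists>y\<in>?Y. sec y (v j) \<noteq> sec y (v j')" using yY tt_ne by metis
    qed
  qed
qed

end

theorem corollary3p3:
  shows "intersection_saturated grigorchuk_group"
  unfolding intersection_saturated_def
proof (intro allI impI)
  fix n :: nat and c :: "nat set \<Rightarrow> nat"
  assume n: "n \<ge> 1" and cf: "configuration n c"
  let ?J = "{J. J \<subseteq> {1..n} \<and> J \<noteq> {} \<and> c J \<noteq> 0}"
  have "finite ?J" by (rule finite_subset[of _ "Pow {1..n}"]) auto
  then obtain Jf where Jf: "bij_betw Jf {0..<card ?J} ?J" using ex_bij_betw_nat_finite by blast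
  define m where "m = card ?J"
  have Jf': "bij_betw Jf {..<m} ?J" using Jf by (simp add: m_def atLeast0LessThan)
  interpret C: cfg n c Jf m by unfold_locales (rule Jf')
  show "realisable grigorchuk_group n c"
    unfolding realisable_def
  proof (intro exI conjI ballI allI impI)
    fix i show "subgroup (C.Hs i) GG" by (rule C.Hs_sub)
  next
    fix I assume I: "I \<subseteq> {1..n} \<and> I \<noteq> {}"
    show "fg_subgroup GG (\<Inter>i\<in>I. C.Hs i) \<longleftrightarrow> c I = 0"
    proof (cases "c I = 0")
      case True
      have cut: "\<forall>t<m. I \<subseteq> Jf t \<longrightarrow> (\<exists>r<C.k t. C.L t ! r \<notin> I)"
      proof (intro allI impI)
        fix t assume t: "t < m" and IJ: "I \<subseteq> Jf t"
        have "Jf t \<noteq> I" using C.Jf_props(3)[OF t] True by auto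
        then obtain j where j: "j \<in> Jf t" "j \<notin> I" using IJ by blast
        then have "j \<in> set (C.L t)" using C.L_props(1)[OF t] by simp
        then obtain r where "r < length (C.L t)" "C.L t ! r = j" by (meson in_set_conv_nth)
        then show "\<exists>r<C.k t. C.L t ! r \<notin> I" using j C.L_props(2)[OF t] by metis
      qed
      interpret F: fgc n c Jf m I by unfold_locales (use I cut in auto)
      show ?thesis using F.fg_case True by simp
    next
      case False
      then have IJ: "I \<in> ?J" using I by blast
      have sj: "Jf ` {..<m} = ?J" by (rule bij_betw_imp_surj_on[OF Jf'])
      have "I \<in> Jf ` {..<m}" using IJ unfolding sj .
      then obtain t0 where t0': "t0 \<in> {..<m}" "I = Jf t0" by (rule imageE)
      then have t0: "t0 < m" "Jf t0 = I" by auto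
      show ?thesis using C.nfg_case[OF t0(1)] t0(2) False by simp
    qed
  qed
qed


end
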